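(* Let $f\in\mathcal{F}$ be a map that is not affine (i.e. not of the form $z\mapsto az+b$), let $A$ be a finite subset of $E$, let $B$ be a finite subset of $\mathbb{C}$ and let $R>0$. Then for every $\varepsilon>0$ there exists $g\in\mathcal{F}(f,A)$ such that $d_{\mathcal{F}}(f,g)<\varepsilon$ and $g^{-1}(B)\cap D(0,R)\subset E$.
   Context: $\mathcal{F}$ is a Fréchet space of entire maps containing all complex polynomial maps, whose topology is finer than the topology of local uniform convergence on $\mathbb{C}$; $(\|\cdot\|_j)_{j\ge0}$ is a sequence of seminorms defining its topology and $d_{\mathcal{F}}(f,g)=\sum_{j\ge0}2^{-j}\min\{1,\|f-g\|_j\}$. $E$ is a countable dense subset of $\mathbb{C}$. For $f\in\mathcal{F}$ and $A\subseteq\mathbb{C}$, $\mathcal{F}(f,A)=\{g\in\mathcal{F}: g|_A=f|_A \text{ and } g'|_A=f'|_A\}$. $D(0,R)$ is the open disk of radius $R$ centered at $0$. *)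

theory Defs
  imports "HOL-Complex_Analysis.Complex_Analysis"
begin

definition dF :: "(nat \<Rightarrow> (complex \<Rightarrow> complex) \<Rightarrow> real) \<Rightarrow> (complex \<Rightarrow> complex) \<Rightarrow> (complex \<Rightarrow> complex) \<Rightarrow> real" where
  "dF nrm f g = (\<Sum>j. (1/2) ^ j * min 1 (nrm j (\<lambda>z. f z - g z)))"

text \<open>F is a Frechet space of entire maps (a complex vector space of entire functions,
  with topology given by the separating sequence of seminorms nrm, complete for dF),
  containing all complex polynomial maps, whose topology is finer than the topology of
  local uniform convergence on the complex plane.\<close>
definition frechet_entire_space ::
  "(complex \<Rightarrow> complex) set \<Rightarrow> (nat \<Rightarrow> (complex \<Rightarrow> complex) \<Rightarrow> real) \<Rightarrow> bool" where
  "frechet_entire_space F nrm \<longleftrightarrow>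
     (\<forall>f\<in>F. f holomorphic_on UNIV) \<and>
     (\<lambda>z. 0) \<in> F \<and>
     (\<forall>f\<in>F. \<forall>g\<in>F. (\<lambda>z. f z + g z) \<in> F) \<and>
     (\<forall>f\<in>F. \<forall>c. (\<lambda>z. c * f z) \<in> F) \<and>
     (\<forall>p. (\<lambda>z. poly p z) \<in> F) \<and>
     (\<forall>j. \<forall>f\<in>F. 0 \<le> nrm j f) \<and>
     (\<forall>j. \<forall>f\<in>F. \<forall>c. nrm j (\<lambda>z. c * f z) = norm c * nrm j f) \<and>
     (\<forall>j. \<forall>f\<in>F. \<forall>g\<in>F. nrm j (\<lambda>z. f z + g z) \<le> nrm j f + nrm j g) \<and>
     (\<forall>f\<in>F. (\<forall>j. nrm j f = 0) \<longrightarrow> f = (\<lambda>z. 0)) \<and>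
     (\<forall>s. (\<forall>n. s n \<in> F) \<and> (\<forall>e>0. \<exists>N. \<forall>m\<ge>N. \<forall>n\<ge>N. dF nrm (s m) (s n) < e)
          \<longrightarrow> (\<exists>l\<in>F. (\<lambda>n. dF nrm (s n) l) \<longlonglongrightarrow> 0)) \<and>
     (\<forall>K. compact K \<longrightarrow> (\<forall>e>0. \<exists>\<delta>>0. \<forall>f\<in>F. \<forall>g\<in>F.
          dF nrm f g < \<delta> \<longrightarrow> (\<forall>z\<in>K. norm (f z - g z) < e)))"

definition FA :: "(complex \<Rightarrow> complex) set \<Rightarrow> (complex \<Rightarrow> complex) \<Rightarrow> complex set \<Rightarrow> (complex \<Rightarrow> complex) set" where
  "FA F f A = {g \<in> F. (\<forall>a\<in>A. g a = f a) \<and> (\<forall>a\<in>A. deriv g a = deriv f a)}"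

end

theory Submission
  imports Defs
begin

lemma entire_freq_nonzero:
  fixes h :: "complex \<Rightarrow> complex"
  assumes "h holomorphic_on UNIV" "h z1 \<noteq> 0"
  shows "frequently (\<lambda>z. h z \<noteq> 0) (at x)"
proof (rule ccontr)
  assume "\<not> ?thesis"
  hence ev: "eventually (\<lambda>z. h z = 0) (at x)" by (simp add: not_frequently)
  have "x islimpt {z. h z = 0}"
    unfolding islimpt_iff_eventually
  proof
    assume "eventually (\<lambda>y. y \<notin> {z. h z = 0}) (at x)"
    with ev have "eventually (\<lambda>y. False) (at x)" by eventually_elim auto
    thus False by (simp add: eventually_False)
  qed
  then have "h z1 = 0"
    by (rule analytic_continuation[OF assms(1) open_UNIV connected_UNIV subset_UNIV UNIV_I _ _ UNIV_I]) auto
  with assms show False by simp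
qed


lemma entire_finite_zeros:
  fixes h :: "complex \<Rightarrow> complex"
  assumes "h holomorphic_on UNIV" "h z1 \<noteq> 0" "compact K"
  shows "finite {z\<in>K. h z = 0}"
proof (cases "h constant_on UNIV")
  case True
  then have "\<forall>z. h z = h z1" unfolding constant_on_def by auto
  then have "h = (\<lambda>_. h z1)" by (intro ext) simp
  then have "{z\<in>K. h z = 0} = {}" using assms(2) by (metis (mono_tags, lifting) empty_Collect_eq)
  then show ?thesis by (metis finite.emptyI)
next
  case False
  then show ?thesis using holomorphic_compact_finite_zeros[OF assms(1) open_UNIV connected_UNIV assms(3)] by auto
qed

lemma ord_ge_mult:
  fixes u v :: "complex \<Rightarrow> complex"
  assumes "u holomorphic_on U" "v holomorphic_on U" "open U" "x \<in> U"
    and "\<forall>k<n. (deriv^^k) v x = 0"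
  shows "\<forall>k<n. (deriv^^k) (\<lambda>z. u z * v z) x = 0"
proof (intro allI impI)
  fix k assume "k < n"
  have "(deriv^^k) (\<lambda>z. u z * v z) x =
      (\<Sum>i = 0..k. of_nat (k choose i) * (deriv ^^ i) u x * (deriv ^^ (k-i)) v x)"
    by (rule higher_deriv_mult[OF assms(1-4)])
  also have "\<dots> = 0"
    using assms(5) \<open>k < n\<close> by (intro sum.neutral) auto
  finally show "(deriv^^k) (\<lambda>z. u z * v z) x = 0" .
qed

lemma ord_ge_power:
  "\<forall>k<n. (deriv^^k) (\<lambda>z. (z - x)^n) x = (0::complex)"
  by (auto simp: higher_deriv_power)

lemma ord_ge_factor:
  fixes h u :: "complex \<Rightarrow> complex"
  assumes "u holomorphic_on U" "h holomorphic_on U" "open U" "x \<in> U"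
    and "\<And>z. z \<in> U \<Longrightarrow> h z = u z * (z - x)^n"
  shows "\<forall>k<n. (deriv^^k) h x = 0"
proof (intro allI impI)
  fix k assume k: "k < n"
  have "(deriv^^k) h x = (deriv^^k) (\<lambda>z. u z * (z - x)^n) x"
    by (rule higher_deriv_transform_within_open[OF assms(2) _ assms(3,4)])
       (auto intro!: holomorphic_intros assms(1) simp: assms(5))
  also have "\<dots> = 0"
    using ord_ge_mult[OF assms(1) _ assms(3,4) ord_ge_power[of n x]] k
    by (simp add: holomorphic_intros)
  finally show "(deriv^^k) h x = 0" .
qed

lemma ord_ge_add:
  fixes f g :: "complex \<Rightarrow> complex"
  assumes "f holomorphic_on U" "g holomorphic_on U" "open U" "x \<in> U"
    and "\<forall>k<n. (deriv^^k) f x = 0" "\<forall>k<n. (deriv^^k) g x = 0"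
  shows "\<forall>k<n. (deriv^^k) (\<lambda>z. f z + g z) x = 0"
  using assms by (simp add: higher_deriv_add[OF assms(1-4)])

lemma zorder_ge_of_ord:
  fixes h :: "complex \<Rightarrow> complex"
  assumes "h holomorphic_on UNIV" "h z1 \<noteq> 0" "\<forall>k<n. (deriv^^k) h x = 0"
  shows "zorder h x \<ge> int n"
proof (rule zorder_geI[OF _ assms(1) open_UNIV connected_UNIV UNIV_I UNIV_I assms(2)])
  show "h analytic_on {x}"
    using assms(1) analytic_on_open[OF open_UNIV] analytic_on_subset by blast
qed (use assms(3) in auto)

lemma ord_of_zorder:
  fixes h :: "complex \<Rightarrow> complex"
  assumes "h holomorphic_on UNIV" "h z1 \<noteq> 0"
  shows "\<forall>k<nat (zorder h x). (deriv^^k) h x = 0"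
proof -
  obtain r where r: "r > 0" "zor_poly h x holomorphic_on cball x r"
    "\<forall>w\<in>cball x r. h w = zor_poly h x w * (w - x) ^ nat (zorder h x)"
    using zorder_exist_zero[OF assms(1) open_UNIV connected_UNIV UNIV_I, of x] assms(2) by blast
  show ?thesis
    by (rule ord_ge_factor[of "zor_poly h x" "ball x r"])
       (use r assms(1) in \<open>auto intro: holomorphic_on_subset\<close>)
qed

lemma zorder_pos_entire:
  fixes h :: "complex \<Rightarrow> complex"
  assumes "h holomorphic_on UNIV" "h z1 \<noteq> 0" "h x = 0"
  shows "zorder h x > 0"
  using zorder_pos_iff[OF assms(1) open_UNIV UNIV_I entire_freq_nonzero[OF assms(1,2)]] assms(3) by simp





lemma winding_circ_out:
  assumes "r > 0" "norm z > r"
  shows "winding_number (circlepath 0 r) z = 0"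
  by (rule winding_number_zero_outside[of _ "cball 0 r"]) (use assms in auto)

lemma count_conv:
  fixes q :: "complex \<Rightarrow> complex"
  assumes "r > 0" "\<forall>z. norm z = r \<longrightarrow> q z \<noteq> 0"
    and fin: "finite {p\<in>ball 0 (r+1). q p = 0}"
  shows "(\<Sum>p\<in>{p\<in>ball 0 (r+1). q p = 0}. winding_number (circlepath 0 r) p * of_int (zorder q p))
       = of_int (\<Sum>z\<in>{z. norm z < r \<and> q z = 0}. zorder q z)"
proof -
  have sub: "{z. norm z < r \<and> q z = 0} \<subseteq> {p\<in>ball 0 (r+1). q p = 0}" by auto
  have "(\<Sum>p\<in>{p\<in>ball 0 (r+1). q p = 0}. winding_number (circlepath 0 r) p * of_int (zorder q p))
     = (\<Sum>p\<in>{z. norm z < r \<and> q z = 0}. winding_number (circlepath 0 r) p * of_int (zorder q p))"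
  proof (rule sum.mono_neutral_right[OF fin sub], intro ballI)
    fix x assume x: "x \<in> {p\<in>ball 0 (r+1). q p = 0} - {z. norm z < r \<and> q z = 0}"
    then have "q x = 0" "\<not> norm x < r" by auto
    then have "norm x > r" using assms(2) by (metis linorder_neqE_linordered_idom)
    then show "winding_number (circlepath 0 r) x * of_int (zorder q x) = 0"
      using winding_circ_out[OF assms(1)] by simp
  qed
  also have "\<dots> = (\<Sum>p\<in>{z. norm z < r \<and> q z = 0}. of_int (zorder q p))"
    by (intro sum.cong refl) (simp add: winding_number_circlepath)
  also have "\<dots> = of_int (\<Sum>z\<in>{z. norm z < r \<and> q z = 0}. zorder q z)" by simp
  finally show ?thesis .
qed

lemma rouche_count:
  fixes h p :: "complex \<Rightarrow> complex"
  assumes hh: "h holomorphic_on UNIV" and hp: "p holomorphic_on UNIV" and r: "r > 0"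
    and less: "\<forall>z. norm z = r \<longrightarrow> norm (p z) < norm (h z)"
  shows "(\<Sum>z\<in>{z. norm z < r \<and> h z + p z = 0}. zorder (\<lambda>z. h z + p z) z)
       = (\<Sum>z\<in>{z. norm z < r \<and> h z = 0}. zorder h z)"
proof -
  define s where "s = ball (0::complex) (r+1)"
  define z1 :: complex where "z1 = of_real r"
  have nz1: "norm z1 = r" using r by (simp add: z1_def)
  have hz1: "h z1 \<noteq> 0" using less nz1 by (metis norm_eq_zero norm_not_less_zero)
  have hpz1: "h z1 + p z1 \<noteq> 0" using less nz1 by (metis add_eq_0_iff norm_minus_cancel order_less_irrefl)
  have hph: "(\<lambda>z. h z + p z) holomorphic_on UNIV" using hh hp by (intro holomorphic_intros)
  have fin1: "finite {z\<in>s. h z + p z = 0}"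
    using entire_finite_zeros[OF hph hpz1, of "cball 0 (r+1)"] unfolding s_def
    by (rule finite_subset[rotated]) auto
  have fin2: "finite {z\<in>s. h z = 0}"
    using entire_finite_zeros[OF hh hz1, of "cball 0 (r+1)"] unfolding s_def
    by (rule finite_subset[rotated]) auto
  have R: "(\<Sum>w\<in>{z\<in>s. h z + p z = 0}. winding_number (circlepath 0 r) w * of_int (zorder (\<lambda>z. h z + p z) w))
          = (\<Sum>w\<in>{z\<in>s. h z = 0}. winding_number (circlepath 0 r) w * of_int (zorder h w))"
  proof (rule Rouche_theorem[of s h p, OF _ _ fin1 fin2])
    show "open s" "connected s" unfolding s_def by auto
    show "h holomorphic_on s" "p holomorphic_on s" using hh hp by (auto intro: holomorphic_on_subset)
    show "path_image (circlepath 0 r) \<subseteq> s" using r unfolding s_def by auto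
    show "\<forall>z\<in>path_image (circlepath 0 r). cmod (h z) > cmod (p z)" using less r by auto
    show "\<forall>z. z \<notin> s \<longrightarrow> winding_number (circlepath 0 r) z = 0"
      using winding_circ_out[OF r] unfolding s_def by auto
  qed auto
  have c1: "\<forall>z. norm z = r \<longrightarrow> h z + p z \<noteq> 0"
    using less by (metis add_eq_0_iff norm_minus_cancel order_less_irrefl)
  have c2: "\<forall>z. norm z = r \<longrightarrow> h z \<noteq> 0"
    using less by (metis norm_eq_zero norm_not_less_zero)
  have "of_int (\<Sum>z\<in>{z. norm z < r \<and> h z + p z = 0}. zorder (\<lambda>z. h z + p z) z)
      = (of_int (\<Sum>z\<in>{z. norm z < r \<and> h z = 0}. zorder h z) :: complex)"
    using count_conv[OF r c1 fin1[unfolded s_def]] count_conv[OF r c2 fin2[unfolded s_def]] R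
    unfolding s_def by simp
  then show ?thesis by (simp only: of_int_eq_iff)
qed

lemma exact_zeros:
  fixes Z D :: "complex set" and ord :: "complex \<Rightarrow> int" and mu :: "complex \<Rightarrow> nat"
  assumes "finite Z" "D \<subseteq> Z" "\<forall>z\<in>Z. ord z > 0" "\<forall>d\<in>D. ord d \<ge> int (mu d)"
    and "(\<Sum>z\<in>Z. ord z) = (\<Sum>d\<in>D. int (mu d))"
  shows "Z = D"
proof (rule ccontr)
  assume "Z \<noteq> D"
  then obtain y where y: "y \<in> Z" "y \<notin> D" using assms(2) by auto
  have fD: "finite D" using assms(1,2) finite_subset by auto
  have "(\<Sum>z\<in>Z. ord z) = (\<Sum>z\<in>D. ord z) + (\<Sum>z\<in>Z-D. ord z)"
    using assms(1,2) by (metis add.commute sum.subset_diff)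
  moreover have "(\<Sum>z\<in>D. ord z) \<ge> (\<Sum>d\<in>D. int (mu d))"
    using assms(4) by (intro sum_mono) auto
  moreover have "(\<Sum>z\<in>Z-D. ord z) > 0"
    using assms(1,3) y by (intro sum_pos2[of _ y]) auto
  ultimately show False using assms(5) by linarith
qed



lemma fes_conj:
  assumes "frechet_entire_space F nrm"
  shows "(\<forall>f\<in>F. f holomorphic_on UNIV) \<and>
     (\<lambda>z. 0) \<in> F \<and>
     (\<forall>f\<in>F. \<forall>g\<in>F. (\<lambda>z. f z + g z) \<in> F) \<and>
     (\<forall>f\<in>F. \<forall>c. (\<lambda>z. c * f z) \<in> F) \<and>
     (\<forall>p. (\<lambda>z. poly p z) \<in> F) \<and>
     (\<forall>j. \<forall>f\<in>F. 0 \<le> nrm j f) \<and>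
     (\<forall>j. \<forall>f\<in>F. \<forall>c. nrm j (\<lambda>z. c * f z) = norm c * nrm j f) \<and>
     (\<forall>j. \<forall>f\<in>F. \<forall>g\<in>F. nrm j (\<lambda>z. f z + g z) \<le> nrm j f + nrm j g)"
  using assms[unfolded frechet_entire_space_def] by (elim conjE) (intro conjI)

lemma fes_holo: "frechet_entire_space F nrm \<Longrightarrow> f \<in> F \<Longrightarrow> f holomorphic_on UNIV"
  using fes_conj by blast
lemma fes_add: "frechet_entire_space F nrm \<Longrightarrow> f \<in> F \<Longrightarrow> g \<in> F \<Longrightarrow> (\<lambda>z. f z + g z) \<in> F"
  using fes_conj by blast
lemma fes_cmult: "frechet_entire_space F nrm \<Longrightarrow> f \<in> F \<Longrightarrow> (\<lambda>z. c * f z) \<in> F"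
  using fes_conj by blast
lemma fes_poly: "frechet_entire_space F nrm \<Longrightarrow> (\<lambda>z. poly p z) \<in> F"
  using fes_conj by blast
lemma fes_nonneg: "frechet_entire_space F nrm \<Longrightarrow> f \<in> F \<Longrightarrow> 0 \<le> nrm j f"
  using fes_conj by blast
lemma fes_homog: "frechet_entire_space F nrm \<Longrightarrow> f \<in> F \<Longrightarrow> nrm j (\<lambda>z. c * f z) = norm c * nrm j f"
  using fes_conj by blast
lemma fes_tri: "frechet_entire_space F nrm \<Longrightarrow> f \<in> F \<Longrightarrow> g \<in> F \<Longrightarrow> nrm j (\<lambda>z. f z + g z) \<le> nrm j f + nrm j g"
  using fes_conj by blast


lemma fes_diff:
  assumes fes: "frechet_entire_space F nrm" and "f \<in> F" "g \<in> F"
  shows "(\<lambda>z. f z - g z) \<in> F"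
proof -
  have "(\<lambda>z. (-1) * g z) \<in> F" using fes_cmult[OF fes assms(3)] by blast
  then have "(\<lambda>z. f z + (\<lambda>z. (-1) * g z) z) \<in> F" using fes_add[OF fes assms(2)] by blast
  then show ?thesis by simp
qed

lemma fes_nrm_zero:
  assumes fes: "frechet_entire_space F nrm" and "g \<in> F"
  shows "nrm j (\<lambda>z. 0) = 0"
proof -
  have "nrm j (\<lambda>z. 0 * g z) = norm (0::complex) * nrm j g"
    by (rule fes_homog[OF fes assms(2)])
  then show ?thesis by simp
qed

lemma dF_summable:
  assumes fes: "frechet_entire_space F nrm" and "f \<in> F" "g \<in> F"
  shows "summable (\<lambda>j. (1/2::real) ^ j * min 1 (nrm j (\<lambda>z. f z - g z)))"
proof (rule summable_comparison_test'[of "\<lambda>j. (1/2::real)^j" 0])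
  show "summable (\<lambda>j. (1/2::real)^j)" by (rule summable_geometric) simp
  fix j
  have "nrm j (\<lambda>z. f z - g z) \<ge> 0"
    using fes_nonneg[OF fes fes_diff[OF fes assms(2,3)]] by blast
  then show "norm ((1/2::real) ^ j * min 1 (nrm j (\<lambda>z. f z - g z))) \<le> (1/2)^j"
    by (simp add: abs_mult min_def)
qed

lemma dF_self:
  assumes fes: "frechet_entire_space F nrm" and "g \<in> F"
  shows "dF nrm g g = 0"
  unfolding dF_def using fes_nrm_zero[OF fes assms(2)] by simp

lemma dF_triangle:
  assumes fes: "frechet_entire_space F nrm" and "f \<in> F" "g \<in> F" "h \<in> F"
  shows "dF nrm f h \<le> dF nrm f g + dF nrm g h"
proof -
  have le: "nrm j (\<lambda>z. f z - h z) \<le> nrm j (\<lambda>z. f z - g z) + nrm j (\<lambda>z. g z - h z)" for j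
  proof -
    have "nrm j (\<lambda>z. (\<lambda>z. f z - g z) z + (\<lambda>z. g z - h z) z) \<le> nrm j (\<lambda>z. f z - g z) + nrm j (\<lambda>z. g z - h z)"
      by (rule fes_tri[OF fes fes_diff[OF fes assms(2,3)] fes_diff[OF fes assms(3,4)]])
    then show ?thesis by simp
  qed
  have nn: "nrm j (\<lambda>z. f z - g z) \<ge> 0" "nrm j (\<lambda>z. g z - h z) \<ge> 0" for j
    by (rule fes_nonneg[OF fes fes_diff[OF fes assms(2,3)]], rule fes_nonneg[OF fes fes_diff[OF fes assms(3,4)]])
  have "dF nrm f h \<le> (\<Sum>j. (1/2::real) ^ j * min 1 (nrm j (\<lambda>z. f z - g z)) + (1/2::real) ^ j * min 1 (nrm j (\<lambda>z. g z - h z)))"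
    unfolding dF_def
  proof (rule suminf_le)
    fix j
    have "min 1 (nrm j (\<lambda>z. f z - h z)) \<le> min 1 (nrm j (\<lambda>z. f z - g z)) + min 1 (nrm j (\<lambda>z. g z - h z))"
      using le[of j] nn[of j] by linarith
    then show "(1/2::real) ^ j * min 1 (nrm j (\<lambda>z. f z - h z)) \<le> (1/2::real) ^ j * min 1 (nrm j (\<lambda>z. f z - g z)) + (1/2::real) ^ j * min 1 (nrm j (\<lambda>z. g z - h z))"
      by (simp add: distrib_left[symmetric])
  qed (intro dF_summable[OF fes] summable_add assms)+
  also have "\<dots> = dF nrm f g + dF nrm g h"
    unfolding dF_def by (rule suminf_add[symmetric]) (intro dF_summable[OF fes] assms)+
  finally show ?thesis .
qed



lemma higher_deriv_poly: "(deriv^^i) (poly p) = poly ((pderiv^^i) (p::complex poly))"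
proof (induction i)
  case 0 then show ?case by simp
next
  case (Suc i)
  have "deriv (poly ((pderiv^^i) p)) = poly (pderiv ((pderiv^^i) p))"
    by (intro ext DERIV_imp_deriv poly_DERIV)
  then show ?case using Suc by simp
qed

lemma coeff_bound:
  fixes p :: "complex poly"
  assumes "\<forall>z. norm z = 1 \<longrightarrow> norm (poly p z) \<le> \<eta>"
  shows "norm (coeff p i) \<le> \<eta>"
proof -
  have "norm ((deriv^^i) (poly p) 0) \<le> fact i * \<eta> / 1^i"
    by (rule Cauchy_inequality) (use assms in \<open>auto intro!: holomorphic_intros continuous_intros\<close>)
  moreover have "(deriv^^i) (poly p) 0 = fact i * coeff p i"
    by (simp add: higher_deriv_poly poly_0_coeff_0 coeff_higher_pderiv pochhammer_fact)
  ultimately have "fact i * norm (coeff p i) \<le> fact i * \<eta>"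
    by (simp add: norm_mult)
  then show ?thesis by simp
qed

lemma fes_monom: "frechet_entire_space F nrm \<Longrightarrow> (\<lambda>z. z^i) \<in> F"
  using fes_poly[of F nrm "monom 1 i"] by (simp add: poly_monom)

lemma nrm_sum_bound:
  assumes fes: "frechet_entire_space F nrm"
  shows "(\<lambda>z. \<Sum>i\<le>n. c i * z^i) \<in> F \<and>
         nrm j (\<lambda>z. \<Sum>i\<le>n. c i * z^i) \<le> (\<Sum>i\<le>n. norm (c i) * nrm j (\<lambda>z. z^i))"
proof (induction n)
  case 0
  have "(\<lambda>z. c 0 * z^0) \<in> F" by (rule fes_cmult[OF fes fes_monom[OF fes]])
  moreover have "nrm j (\<lambda>z. c 0 * z^0) = norm (c 0) * nrm j (\<lambda>z. z^0)"
    by (rule fes_homog[OF fes fes_monom[OF fes]])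
  ultimately show ?case by simp
next
  case (Suc n)
  have m: "(\<lambda>z. c (Suc n) * z^Suc n) \<in> F" by (rule fes_cmult[OF fes fes_monom[OF fes]])
  have e: "(\<lambda>z. \<Sum>i\<le>Suc n. c i * z^i) = (\<lambda>z. (\<lambda>z. \<Sum>i\<le>n. c i * z^i) z + (\<lambda>z. c (Suc n) * z^Suc n) z)"
    by simp
  have "(\<lambda>z. (\<lambda>z. \<Sum>i\<le>n. c i * z^i) z + (\<lambda>z. c (Suc n) * z^Suc n) z) \<in> F"
    using fes_add[OF fes _ m] Suc by blast
  moreover have "nrm j (\<lambda>z. (\<lambda>z. \<Sum>i\<le>n. c i * z^i) z + (\<lambda>z. c (Suc n) * z^Suc n) z)
      \<le> nrm j (\<lambda>z. \<Sum>i\<le>n. c i * z^i) + nrm j (\<lambda>z. c (Suc n) * z^Suc n)"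
    using fes_tri[OF fes _ m] Suc by blast
  moreover have "nrm j (\<lambda>z. c (Suc n) * z^Suc n) = norm (c (Suc n)) * nrm j (\<lambda>z. z^Suc n)"
    by (rule fes_homog[OF fes fes_monom[OF fes]])
  ultimately show ?case using Suc unfolding e by simp
qed

lemma poly_nrm_bound:
  assumes fes: "frechet_entire_space F nrm" and "degree p \<le> N" "\<eta> \<ge> 0"
    and "\<forall>z. norm z = 1 \<longrightarrow> norm (poly p z) \<le> \<eta>"
  shows "nrm j (poly p) \<le> \<eta> * (\<Sum>i\<le>N. nrm j (\<lambda>z. z^i))"
proof -
  have "poly p = (\<lambda>z. \<Sum>i\<le>N. coeff p i * z^i)"
    using assms(2) by (intro ext) (simp add: poly_altdef sum_le_suminf, rule sum.mono_neutral_left, auto simp: coeff_eq_0)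
  then have "nrm j (poly p) \<le> (\<Sum>i\<le>N. norm (coeff p i) * nrm j (\<lambda>z. z^i))"
    using nrm_sum_bound[OF fes, of "coeff p" N j] by simp
  also have "\<dots> \<le> (\<Sum>i\<le>N. \<eta> * nrm j (\<lambda>z. z^i))"
    by (intro sum_mono mult_right_mono coeff_bound assms(4) fes_nonneg[OF fes fes_monom[OF fes]])
  finally show ?thesis by (simp add: sum_distrib_left)
qed



lemma poly_small_dF:
  assumes fes: "frechet_entire_space F nrm" and "\<delta> > 0"
  shows "\<exists>\<eta>>0. \<forall>p g. degree p \<le> N \<longrightarrow> g \<in> F \<longrightarrow> (\<forall>z. norm z = 1 \<longrightarrow> norm (poly p z) \<le> \<eta>)
           \<longrightarrow> dF nrm g (\<lambda>z. g z + poly p z) < \<delta>"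
proof -
  obtain J where J: "(1/2::real)^J < \<delta>/4"
    using real_arch_pow_inv[of "\<delta>/4" "1/2::real"] assms(2) by auto
  define M where "M j = (\<Sum>i\<le>N. nrm j (\<lambda>z. z^i))" for j
  define S where "S = (\<Sum>j<J. M j)"
  have M0: "M j \<ge> 0" for j unfolding M_def by (intro sum_nonneg fes_nonneg[OF fes fes_monom[OF fes]])
  have S0: "S \<ge> 0" unfolding S_def using M0 by (intro sum_nonneg) auto
  define \<eta> where "\<eta> = \<delta> / (4 * (S + 1))"
  have eta: "\<eta> > 0" unfolding \<eta>_def using S0 assms(2) by auto
  have etaS: "\<eta> * S \<le> \<delta>/4"
    unfolding \<eta>_def using S0 assms(2) by (simp add: field_simps)
  show ?thesis
  proof (intro exI[of _ \<eta>] conjI allI impI eta)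
    fix p :: "complex poly" and g
    assume deg: "degree p \<le> N" and g: "g \<in> F" and small: "\<forall>z. norm z = 1 \<longrightarrow> norm (poly p z) \<le> \<eta>"
    have gp: "(\<lambda>z. g z + poly p z) \<in> F" by (rule fes_add[OF fes g fes_poly[OF fes]])
    define t where "t = (\<lambda>j. (1/2::real) ^ j * min 1 (nrm j (\<lambda>z. g z - (g z + poly p z))))"
    have sm: "summable t" unfolding t_def by (rule dF_summable[OF fes g gp])
    have nrmeq: "nrm j (\<lambda>z. g z - (g z + poly p z)) = nrm j (poly p)" for j
    proof -
      have e: "(\<lambda>z. g z - (g z + poly p z)) = (\<lambda>z. (-1) * poly p z)" by (intro ext) simp
      show ?thesis unfolding e using fes_homog[OF fes fes_poly[OF fes], of j "-1" p] by simp
    qed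
    have pnn: "nrm j (poly p) \<ge> 0" for j using fes_nonneg[OF fes fes_poly[OF fes], of j p] by simp
    have E1: "dF nrm g (\<lambda>z. g z + poly p z) = suminf t" unfolding dF_def t_def by (rule refl)
    have E2: "suminf t = (\<Sum>n. t (n + J)) + (\<Sum>j<J. t j)"
      by (rule suminf_split_initial_segment[OF sm])
    have E3: "(\<Sum>j<J. t j) \<le> (\<Sum>j<J. \<eta> * M j)"
    proof (intro sum_mono)
      fix j
      have "t j \<le> nrm j (poly p)"
      proof -
        have a: "0 \<le> min 1 (nrm j (poly p))" using pnn[of j] by simp
        have b: "(1/2::real)^j \<le> 1" by (rule power_le_one) auto
        have "(1/2::real) ^ j * min 1 (nrm j (poly p)) \<le> min 1 (nrm j (poly p))"
          by (rule mult_left_le_one_le[OF a _ b]) simp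
        also have "\<dots> \<le> nrm j (poly p)" by simp
        finally show ?thesis unfolding t_def nrmeq by simp
      qed
      also have "\<dots> \<le> \<eta> * M j" unfolding M_def
        by (rule poly_nrm_bound[OF fes deg less_imp_le[OF eta] small])
      finally show "t j \<le> \<eta> * M j" .
    qed
    have E4: "(\<Sum>j<J. \<eta> * M j) = \<eta> * S" unfolding S_def by (simp add: sum_distrib_left)
    have E5: "(\<Sum>n. t (n + J)) \<le> (\<Sum>n. (1/2::real)^J * (1/2)^n)"
    proof (rule suminf_le)
      fix n
      show "t (n + J) \<le> (1/2::real)^J * (1/2)^n"
      proof -
        have a: "0 \<le> min 1 (nrm (n+J) (poly p))" using pnn[of "n+J"] by simp
        have "(1/2::real) ^ (n+J) * min 1 (nrm (n+J) (poly p)) \<le> (1/2::real) ^ (n+J) * 1"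
          by (rule mult_left_mono) auto
        then show ?thesis unfolding t_def nrmeq by (simp add: power_add)
      qed
    qed (use sm in \<open>auto intro: summable_ignore_initial_segment summable_mult summable_geometric\<close>)
    have E6: "(\<Sum>n. (1/2::real)^J * (1/2)^n) = (1/2)^J * 2"
    proof -
      have "(\<Sum>n. (1/2::real)^n) = 2" using suminf_geometric[of "1/2::real"] by simp
      moreover have "(\<Sum>n. (1/2::real)^J * (1/2)^n) = (1/2)^J * (\<Sum>n. (1/2::real)^n)"
        by (rule suminf_mult) (rule summable_geometric, simp)
      ultimately show ?thesis by simp
    qed
    show "dF nrm g (\<lambda>z. g z + poly p z) < \<delta>" using E1 E2 E3 E4 E5 E6 J etaS assms(2) by linarith
  qed
qed



lemma higher_deriv_sum_lessThan:
  fixes f :: "nat \<Rightarrow> complex \<Rightarrow> complex"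
  assumes "\<And>i. f i holomorphic_on UNIV"
  shows "(deriv^^j) (\<lambda>z. \<Sum>i<m. f i z) x = (\<Sum>i<m. (deriv^^j) (f i) x)"
proof (induction m)
  case 0 then show ?case by (simp add: higher_deriv_const)
next
  case (Suc m)
  have "(deriv^^j) (\<lambda>z. \<Sum>i<Suc m. f i z) x = (deriv^^j) (\<lambda>z. (\<Sum>i<m. f i z) + f m z) x"
    by simp
  also have "\<dots> = (deriv^^j) (\<lambda>z. \<Sum>i<m. f i z) x + (deriv^^j) (f m) x"
    by (rule higher_deriv_add[of _ UNIV]) (auto intro!: holomorphic_intros assms)
  finally show ?case using Suc by simp
qed

lemma higher_deriv_taylor:
  fixes c :: "nat \<Rightarrow> complex"
  assumes "j < m"
  shows "(deriv^^j) (\<lambda>z. \<Sum>i<m. c i * (z - w)^i) w = fact j * c j"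
proof -
  have "(deriv^^j) (\<lambda>z. \<Sum>i<m. c i * (z - w)^i) w = (\<Sum>i<m. (deriv^^j) (\<lambda>z. c i * (z - w)^i) w)"
    by (rule higher_deriv_sum_lessThan) (auto intro!: holomorphic_intros)
  also have "\<dots> = (\<Sum>i<m. c i * (deriv^^j) (\<lambda>z. (z - w)^i) w)"
    by (intro sum.cong refl higher_deriv_cmult[of _ UNIV]) (auto intro!: holomorphic_intros)
  also have "\<dots> = (\<Sum>i<m. if i = j then c j * fact j else 0)"
  proof (intro sum.cong refl)
    fix i assume "i \<in> {..<m}"
    show "c i * (deriv^^j) (\<lambda>z. (z - w)^i) w = (if i = j then c j * fact j else 0)"
    proof (cases "i = j")
      case True then show ?thesis by (simp add: higher_deriv_power pochhammer_fact)
    next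
      case False
      show ?thesis
      proof (cases "i < j")
        case True
        then have "Suc i - j = 0" by simp
        then show ?thesis using True False by (simp add: higher_deriv_power pochhammer_0_left)
      next
        case False
        then show ?thesis using \<open>i \<noteq> j\<close> by (simp add: higher_deriv_power)
      qed
    qed
  qed
  also have "\<dots> = fact j * c j" using assms by (simp add: sum.delta)
  finally show ?thesis .
qed



lemma poly_double_root:
  fixes q X :: "complex poly"
  assumes "poly q a = 0"
  shows "poly (q^2 * X) a = 0" "poly (pderiv (q^2 * X)) a = 0"
proof -
  show "poly (q^2 * X) a = 0" using assms by simp
  have "pderiv (q^2 * X) = q * (q * pderiv X + X * pderiv q + X * pderiv q)"
    by (simp add: pderiv_mult power2_eq_square algebra_simps)
  then show "poly (pderiv (q^2 * X)) a = 0" using assms by simp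
qed

lemma poly_linear_power: "poly ([:-s, 1:] ^ k) z = (z - (s::complex)) ^ k"
proof -
  have "poly [:-s, 1:] z = z - s" by simp
  then show ?thesis by (simp only: poly_power)
qed

lemma step:
  fixes F :: "(complex \<Rightarrow> complex) set" and nrm :: "nat \<Rightarrow> (complex \<Rightarrow> complex) \<Rightarrow> real"
    and E A B :: "complex set" and g :: "complex \<Rightarrow> complex" and r \<delta> :: real and z0 :: complex
  assumes fes: "frechet_entire_space F nrm"
    and dense: "closure E = UNIV" and finA: "finite A" and AE: "A \<subseteq> E" and finB: "finite B" and r: "r > 0"
    and gF: "g \<in> F"
    and sph: "\<forall>b\<in>B. \<forall>z. norm z = r \<longrightarrow> g z \<noteq> b"
    and z0: "norm z0 < r" "g z0 \<in> B" "z0 \<notin> E"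
    and \<delta>: "\<delta> > 0"
  shows "\<exists>P. (\<forall>a\<in>A. poly P a = 0 \<and> poly (pderiv P) a = 0) \<and>
             (\<forall>b\<in>B. \<forall>z. norm z = r \<longrightarrow> g z + poly P z \<noteq> b) \<and>
             dF nrm g (\<lambda>z. g z + poly P z) < \<delta> \<and>
             {z. norm z < r \<and> g z + poly P z \<in> B} - E = {z. norm z < r \<and> g z \<in> B} - E - {z0}"
proof -
  have hol: "g holomorphic_on UNIV" by (rule fes_holo[OF fes gF])
  define zr :: complex where "zr = of_real r"
  have nzr: "norm zr = r" using r by (simp add: zr_def)
  define S where "S = {z. norm z < r \<and> g z \<in> B}"
  have holb: "(\<lambda>z. g z - b) holomorphic_on UNIV" for b using hol by (intro holomorphic_intros)
  have gzr: "g zr - b \<noteq> 0" if "b \<in> B" for b using sph that nzr by auto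
  have finS: "finite S"
  proof -
    have "S \<subseteq> (\<Union>b\<in>B. {z\<in>cball 0 r. g z - b = 0})" unfolding S_def by auto
    moreover have "finite (\<Union>b\<in>B. {z\<in>cball 0 r. g z - b = 0})"
    proof (rule finite_UN_I[OF finB])
      fix b assume "b \<in> B"
      show "finite {z\<in>cball 0 r. g z - b = 0}"
        by (rule entire_finite_zeros[OF holb gzr[OF \<open>b \<in> B\<close>] compact_cball])
    qed
    ultimately show ?thesis by (rule finite_subset)
  qed
  define b0 where "b0 = g z0"
  define m where "m s = nat (zorder (\<lambda>z. g z - g s) s)" for s
  have mpos: "m s \<ge> 1" if "s \<in> S" for s
  proof -
    have "zorder (\<lambda>z. g z - g s) s > 0"
      by (rule zorder_pos_entire[OF holb gzr]) (use that in \<open>auto simp: S_def\<close>)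
    then show ?thesis unfolding m_def by simp
  qed
  have zm: "zorder (\<lambda>z. g z - g s) s = int (m s)" if "s \<in> S" for s
  proof -
    have "zorder (\<lambda>z. g z - g s) s > 0"
      by (rule zorder_pos_entire[OF holb gzr]) (use that in \<open>auto simp: S_def\<close>)
    then show ?thesis unfolding m_def by simp
  qed
  have ordm: "\<forall>k<m s. (deriv^^k) (\<lambda>z. g z - g s) s = 0" if "s \<in> S" for s
    unfolding m_def by (rule ord_of_zorder[OF holb gzr]) (use that in \<open>auto simp: S_def\<close>)
  have z0S: "z0 \<in> S" using z0 by (simp add: S_def)
  have z0A: "z0 \<notin> A" using AE z0 by auto
  define Qa where "Qa = (\<Prod>a\<in>A. [:-a, 1:])"
  define Om where "Om = Qa^2 * (\<Prod>s\<in>S-{z0}. [:-s, 1:] ^ m s)"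
  have polyOm: "poly Om z = (\<Prod>a\<in>A. z - a)^2 * (\<Prod>s\<in>S-{z0}. (z - s) ^ m s)" for z
    unfolding Om_def Qa_def by (simp add: poly_prod poly_power)
  have Om_nz: "poly Om z \<noteq> 0" if "z \<notin> A" "z \<notin> S - {z0}" for z
  proof -
    have "(\<Prod>a\<in>A. z - a) \<noteq> 0" using that(1) finA by (simp add: prod_zero_iff)
    moreover have "(\<Prod>s\<in>S-{z0}. (z - s) ^ m s) \<noteq> 0" using that(2) finS by (simp add: prod_zero_iff)
    ultimately show ?thesis unfolding polyOm by simp
  qed
  define m0 where "m0 = m z0"
  have m0: "m0 \<ge> 1" using mpos z0S by (simp add: m0_def)
  define h0 where "h0 = (\<lambda>z. g z - b0)"
  have h0zr: "h0 zr \<noteq> 0" unfolding h0_def b0_def using gzr z0 by blast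
  obtain r0 where r0: "r0 > 0" "zor_poly h0 z0 holomorphic_on cball z0 r0"
      "\<forall>w\<in>cball z0 r0. h0 w = zor_poly h0 z0 w * (w - z0) ^ m0"
  proof -
    have "\<exists>r. r>0 \<and> cball z0 r \<subseteq> UNIV \<and> zor_poly h0 z0 holomorphic_on cball z0 r
        \<and> (\<forall>w\<in>cball z0 r. h0 w = zor_poly h0 z0 w * (w-z0) ^ nat (zorder h0 z0) \<and> zor_poly h0 z0 w \<noteq>0)"
      using zorder_exist_zero[OF holb[of b0, folded h0_def] open_UNIV connected_UNIV UNIV_I, of z0] h0zr by blast
    moreover have "nat (zorder h0 z0) = m0" unfolding h0_def m0_def m_def b0_def by simp
    ultimately show ?thesis using that by auto
  qed
  define k where "k = zor_poly h0 z0"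
  obtain Kb where Kb: "Kb > 0" "\<forall>z\<in>cball z0 r0. norm (k z) \<le> Kb"
  proof -
    have "compact (k ` cball z0 r0)"
      by (rule compact_continuous_image[OF holomorphic_on_imp_continuous_on compact_cball]) (use r0 in \<open>simp add: k_def\<close>)
    then obtain K where "K > 0" "\<forall>x\<in>k ` cball z0 r0. norm x \<le> K"
      using compact_imp_bounded bounded_pos by metis
    then show ?thesis using that by auto
  qed
  obtain d where d: "d > 0" "\<forall>x\<in>A \<union> (S - {z0}). x \<noteq> z0 \<longrightarrow> d \<le> dist z0 x"
    using finite_set_avoid[of "A \<union> (S - {z0})" z0] finA finS by auto
  define \<rho>1 where "\<rho>1 = min (min (d/2) r0) ((r - norm z0)/2)"
  have \<rho>1: "\<rho>1 > 0" "\<rho>1 \<le> r0" "\<rho>1 < d" "\<rho>1 \<le> (r - norm z0)/2"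
    unfolding \<rho>1_def using d r0 z0 by (auto simp: min_def)
  have notin: "z \<notin> A" "z \<notin> S - {z0}" if "dist z0 z < d" for z
  proof -
    show "z \<notin> A" using d that z0A by force
    show "z \<notin> S - {z0}" using d that by force
  qed
  have Om_nz1: "poly Om z \<noteq> 0" if "z \<in> cball z0 \<rho>1" for z
    using that \<rho>1 by (intro Om_nz notin) (auto simp: dist_commute)
  have cb_sub: "cball z0 \<rho>1 \<subseteq> ball 0 r"
  proof
    fix z assume "z \<in> cball z0 \<rho>1"
    then have "norm (z - z0) \<le> \<rho>1" by (simp add: dist_norm norm_minus_commute)
    then have "norm z \<le> norm z0 + \<rho>1" by (metis add.commute norm_triangle_sub order.trans add_left_mono)
    then show "z \<in> ball 0 r" using \<rho>1 z0 by auto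
  qed
  obtain c where c: "c > 0" "\<forall>z\<in>cball z0 \<rho>1. c \<le> norm (poly Om z)"
  proof -
    obtain x0 where "x0 \<in> cball z0 \<rho>1" "\<forall>y\<in>cball z0 \<rho>1. norm (poly Om x0) \<le> norm (poly Om y)"
    proof -
      have "continuous_on (cball z0 \<rho>1) (\<lambda>z. norm (poly Om z))" by (intro continuous_intros)
      then show ?thesis
        using continuous_attains_inf[of "cball z0 \<rho>1" "\<lambda>z. norm (poly Om z)"] \<rho>1 that by auto
    qed
    then show ?thesis using that[of "norm (poly Om x0)"] Om_nz1 by auto
  qed
  define \<phi> where "\<phi> = (\<lambda>z. - (g z - b0) / poly Om z)"
  have \<phi>hol: "\<phi> holomorphic_on ball z0 \<rho>1"
    unfolding \<phi>_def using Om_nz1 hol by (auto intro!: holomorphic_intros intro: holomorphic_on_subset)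
  have \<phi>bound: "norm (\<phi> z) \<le> (Kb/c) * norm (z - z0)^m0" if "z \<in> cball z0 \<rho>1" for z
  proof -
    have zr0: "z \<in> cball z0 r0" using that \<rho>1 by auto
    have "norm (\<phi> z) = norm (k z) * norm (z - z0)^m0 / norm (poly Om z)"
      unfolding \<phi>_def k_def using r0(3) zr0 by (simp add: h0_def norm_divide norm_mult norm_power)
    also have "\<dots> \<le> Kb * norm (z - z0)^m0 / c"
      using Kb zr0 c that by (intro frac_le mult_right_mono) auto
    finally show ?thesis by simp
  qed
  define Rb where "Rb = r + 1"
  obtain MOm where MOm: "MOm > 0" "\<forall>z\<in>cball 0 Rb. norm (poly Om z) \<le> MOm"
  proof -
    have "compact ((\<lambda>z. poly Om z) ` cball 0 Rb)"
      by (rule compact_continuous_image[OF _ compact_cball]) (intro continuous_intros)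
    then obtain K where "K > 0" "\<forall>x\<in>(\<lambda>z. poly Om z) ` cball 0 Rb. norm x \<le> K"
      using compact_imp_bounded bounded_pos by metis
    then show ?thesis using that by auto
  qed
  define C where "C = MOm * (of_nat m0 * (Kb/c) * 2^m0 * (2*Rb+1)^m0)"
  have C: "C > 0" unfolding C_def using MOm m0 Kb c r by (auto simp: Rb_def intro!: mult_pos_pos)
  obtain \<eta> where \<eta>: "\<eta> > 0" "\<forall>p g. degree p \<le> degree Om + m0 \<longrightarrow> g \<in> F \<longrightarrow>
      (\<forall>z. norm z = 1 \<longrightarrow> norm (poly p z) \<le> \<eta>) \<longrightarrow> dF nrm g (\<lambda>z. g z + poly p z) < \<delta>"
    using poly_small_dF[OF fes \<delta>, of "degree Om + m0"] by blast
  have Bne: "B \<noteq> {}" using z0 by auto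
  have "\<forall>b\<in>B. \<exists>\<mu>b>0. \<forall>z. norm z = r \<longrightarrow> \<mu>b \<le> norm (g z - b)"
  proof
    fix b assume b: "b \<in> B"
    have "continuous_on (sphere 0 r) (\<lambda>z. norm (g z - b))"
      using hol by (intro continuous_intros holomorphic_on_imp_continuous_on) (auto intro: holomorphic_on_subset)
    then obtain x0 where x0: "x0 \<in> sphere 0 r" "\<forall>y\<in>sphere 0 r. norm (g x0 - b) \<le> norm (g y - b)"
      using continuous_attains_inf[of "sphere 0 r" "\<lambda>z. norm (g z - b)"] r by fastforce
    have "norm (g x0 - b) > 0" using sph b x0(1) by auto
    then show "\<exists>\<mu>b>0. \<forall>z. norm z = r \<longrightarrow> \<mu>b \<le> norm (g z - b)"
      using x0(2) by (intro exI[of _ "norm (g x0 - b)"]) auto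
  qed
  then obtain \<mu>f where \<mu>f: "\<forall>b\<in>B. \<mu>f b > 0 \<and> (\<forall>z. norm z = r \<longrightarrow> \<mu>f b \<le> norm (g z - b))"
    by metis
  define \<mu> where "\<mu> = Min (\<mu>f ` B)"
  have \<mu>: "\<mu> > 0" "\<And>b. b \<in> B \<Longrightarrow> \<mu> \<le> \<mu>f b"
    unfolding \<mu>_def using finB Bne \<mu>f by auto
  define \<rho> where "\<rho> = min (min (\<rho>1/2) 1) (min (\<mu>/(2*C)) (\<eta>/C))"
  have \<rho>: "\<rho> > 0" "\<rho> \<le> \<rho>1/2" "\<rho> \<le> 1" "C * \<rho> \<le> \<mu>/2" "C * \<rho> \<le> \<eta>"
  proof -
    show "\<rho> > 0" unfolding \<rho>_def using \<rho>1 \<mu> \<eta> C by auto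
    have "\<rho> \<le> min (\<rho>1/2) 1" unfolding \<rho>_def by (rule min.cobounded1)
    then show "\<rho> \<le> \<rho>1/2" "\<rho> \<le> 1" by auto
    have "\<rho> \<le> min (\<mu>/(2*C)) (\<eta>/C)" unfolding \<rho>_def by (rule min.cobounded2)
    then have "\<rho> \<le> \<mu>/(2*C)" "\<rho> \<le> \<eta>/C" by auto
    then show "C * \<rho> \<le> \<mu>/2" "C * \<rho> \<le> \<eta>" using C by (auto simp: field_simps)
  qed
  obtain w where w: "w \<in> E" "dist w z0 < \<rho>"
    using dense closure_approachable[of z0 E] \<rho> by auto
  have wz0: "w \<noteq> z0" using w z0 by auto
  have wball: "w \<in> ball z0 \<rho>1" using w \<rho> by (auto simp: dist_commute)
  have wA: "w \<notin> A" and wS: "w \<notin> S"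
    using notin[of w] w \<rho> \<rho>1 wz0 by (auto simp: dist_commute)
  have wr: "norm w < r"
  proof -
    have "w \<in> cball z0 \<rho>1" using wball by auto
    then have "w \<in> ball 0 r" using cb_sub by blast
    then show ?thesis by simp
  qed
  define cc where "cc j = (deriv^^j) \<phi> w / fact j" for j
  have ccb: "norm (cc j) \<le> (Kb/c) * 2^m0 * \<rho>" if "j < m0" for j
  proof -
    have "norm ((deriv^^j) \<phi> w) \<le> fact j * ((Kb/c) * (2*\<rho>)^m0) / \<rho>^j"
    proof (rule Cauchy_inequality)
      have sub: "cball w \<rho> \<subseteq> ball z0 \<rho>1"
      proof
        fix z assume "z \<in> cball w \<rho>"
        then have "dist z0 z \<le> dist z0 w + dist w z" by (metis dist_triangle)
        also have "\<dots> < 2 * \<rho>" using w \<open>z \<in> cball w \<rho>\<close> by (simp add: dist_commute)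
        finally show "z \<in> ball z0 \<rho>1" using \<rho> by auto
      qed
      show "\<phi> holomorphic_on ball w \<rho>" using \<phi>hol sub by (meson ball_subset_cball holomorphic_on_subset order.trans)
      show "continuous_on (cball w \<rho>) \<phi>" using \<phi>hol sub by (meson holomorphic_on_imp_continuous_on holomorphic_on_subset)
      show "0 < \<rho>" by (rule \<rho>(1))
      fix x assume x: "norm (w - x) = \<rho>"
      have "norm (x - z0) \<le> norm (x - w) + norm (w - z0)" using norm_triangle_ineq[of "x - w" "w - z0"] by simp
      also have "\<dots> \<le> 2 * \<rho>" using x w by (simp add: norm_minus_commute dist_norm)
      finally have xz: "norm (x - z0) \<le> 2 * \<rho>" .
      have "x \<in> cball z0 \<rho>1" using xz \<rho> by (auto simp: dist_norm norm_minus_commute)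
      then have "norm (\<phi> x) \<le> (Kb/c) * norm (x - z0)^m0" by (rule \<phi>bound)
      also have "\<dots> \<le> (Kb/c) * (2*\<rho>)^m0"
        using xz Kb c by (intro mult_left_mono power_mono) auto
      finally show "norm (\<phi> x) \<le> (Kb/c) * (2*\<rho>)^m0" .
    qed
    then have "norm (cc j) \<le> ((Kb/c) * (2*\<rho>)^m0) / \<rho>^j"
      unfolding cc_def by (simp add: norm_divide field_simps)
    also have "\<dots> = (Kb/c) * 2^m0 * \<rho>^(m0 - j)"
      using \<rho>(1) that by (simp add: power_mult_distrib power_diff)
    also have "\<dots> \<le> (Kb/c) * 2^m0 * \<rho>^1"
      using \<rho> that Kb c by (intro mult_left_mono power_decreasing) auto
    finally show ?thesis by simp
  qed
  define T where "T = (\<Sum>j<m0. smult (cc j) ([:-w, 1:] ^ j))"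
  have polyT: "poly T z = (\<Sum>j<m0. cc j * (z - w)^j)" for z
    unfolding T_def by (simp add: poly_sum poly_linear_power)
  define P where "P = Om * T"
  have degT: "degree T \<le> m0"
    unfolding T_def
  proof (rule degree_sum_le)
    fix j assume "j \<in> {..<m0}"
    then show "degree (smult (cc j) ([:-w, 1:] ^ j)) \<le> m0"
      by (metis degree_linear_power degree_smult_le lessThan_iff less_imp_le order.trans)
  qed simp
  have degP: "degree P \<le> degree Om + m0"
    unfolding P_def using degT degree_mult_le[of Om T] by linarith
  have Pbound: "norm (poly P z) \<le> C * \<rho>" if "z \<in> cball 0 Rb" for z
  proof -
    have "norm (poly T z) \<le> (\<Sum>j<m0. norm (cc j * (z - w)^j))"
      unfolding polyT by (rule norm_sum)
    also have "\<dots> \<le> (\<Sum>j<m0. (Kb/c) * 2^m0 * \<rho> * (2*Rb+1)^m0)"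
    proof (rule sum_mono)
      fix j assume j: "j \<in> {..<m0}"
      have zw: "norm (z - w) \<le> 2*Rb+1"
        using that wr norm_triangle_ineq4[of z w] by (auto simp: Rb_def)
      have "norm (z - w)^j \<le> (2*Rb+1)^j" using zw by (intro power_mono) auto
      also have "\<dots> \<le> (2*Rb+1)^m0" using j r by (intro power_increasing) (auto simp: Rb_def)
      finally have "norm (z - w)^j \<le> (2*Rb+1)^m0" .
      then have "norm (cc j) * norm (z - w)^j \<le> ((Kb/c) * 2^m0 * \<rho>) * (2*Rb+1)^m0"
        using ccb[of j] j Kb c \<rho> by (intro mult_mono) auto
      then show "norm (cc j * (z - w)^j) \<le> (Kb/c) * 2^m0 * \<rho> * (2*Rb+1)^m0"
        by (simp add: norm_mult norm_power)
    qed
    also have "\<dots> = of_nat m0 * ((Kb/c) * 2^m0 * \<rho> * (2*Rb+1)^m0)" by simp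
    finally have Tb: "norm (poly T z) \<le> of_nat m0 * ((Kb/c) * 2^m0 * \<rho> * (2*Rb+1)^m0)" .
    have "norm (poly P z) = norm (poly Om z) * norm (poly T z)" unfolding P_def by (simp add: norm_mult)
    also have "\<dots> \<le> MOm * (of_nat m0 * ((Kb/c) * 2^m0 * \<rho> * (2*Rb+1)^m0))"
      using MOm that Tb by (intro mult_mono) auto
    also have "\<dots> = C * \<rho>" unfolding C_def by (simp add: algebra_simps)
    finally show ?thesis .
  qed
  have polyhol: "(\<lambda>z. poly p z) holomorphic_on U" for p :: "complex poly" and U
    by (intro holomorphic_intros)
  have ordZ: "\<forall>k<m d. (deriv^^k) (\<lambda>z. (g z - g d) + poly P z) d = 0" if d: "d \<in> S - {z0}" for d
  proof (rule ord_ge_add[of _ UNIV])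
    show "\<forall>k<m d. (deriv^^k) (\<lambda>z. g z - g d) d = 0" using ordm d by auto
    define R where "R = Qa^2 * (\<Prod>s\<in>S-{z0}-{d}. [:-s, 1:] ^ m s) * T"
    have "P = [:-d, 1:] ^ m d * R"
      unfolding P_def Om_def R_def using d finS by (simp add: prod.remove[of "S-{z0}" d] algebra_simps)
    then have "poly P z = poly R z * (z - d) ^ m d" for z by (simp add: poly_linear_power)
    then show "\<forall>k<m d. (deriv^^k) (poly P) d = 0"
      by (intro ord_ge_factor[of "poly R" UNIV]) (auto intro: polyhol)
  qed (auto intro!: holomorphic_intros hol)
  have ordw: "\<forall>k<m0. (deriv^^k) (\<lambda>z. (g z - b0) + poly P z) w = 0"
  proof (intro allI impI)
    fix k assume k: "k < m0"
    define U where "U = ball z0 \<rho>1"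
    have wU: "w \<in> U" using wball by (simp add: U_def)
    have eqU: "(g z - b0) + poly P z = poly Om z * (poly T z - \<phi> z)" if "z \<in> U" for z
    proof -
      have "poly Om z \<noteq> 0" using Om_nz1 that by (auto simp: U_def)
      then show ?thesis unfolding P_def \<phi>_def by (simp add: field_simps)
    qed
    have \<phi>U: "\<phi> holomorphic_on U" using \<phi>hol by (simp add: U_def)
    have ordTphi: "\<forall>j<m0. (deriv^^j) (\<lambda>z. poly T z - \<phi> z) w = 0"
    proof (intro allI impI)
      fix j assume j: "j < m0"
      have "(deriv^^j) (\<lambda>z. poly T z - \<phi> z) w = (deriv^^j) (poly T) w - (deriv^^j) \<phi> w"
        by (rule higher_deriv_diff[OF polyhol \<phi>U _ wU]) (simp add: U_def)
      also have "(deriv^^j) (poly T) w = (deriv^^j) (\<lambda>z. \<Sum>i<m0. cc i * (z - w)^i) w"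
        using polyT by (metis ext)
      also have "\<dots> = fact j * cc j" by (rule higher_deriv_taylor[OF j])
      also have "\<dots> = (deriv^^j) \<phi> w" unfolding cc_def by simp
      finally show "(deriv^^j) (\<lambda>z. poly T z - \<phi> z) w = 0" by simp
    qed
    have "(deriv^^k) (\<lambda>z. (g z - b0) + poly P z) w = (deriv^^k) (\<lambda>z. poly Om z * (poly T z - \<phi> z)) w"
      by (rule higher_deriv_transform_within_open[OF _ _ _ wU])
         (use eqU \<phi>U hol in \<open>auto simp: U_def intro!: holomorphic_intros intro: holomorphic_on_subset\<close>)
    also have "\<dots> = 0"
    proof -
      have "(\<lambda>z. poly T z - \<phi> z) holomorphic_on U" using \<phi>U by (intro holomorphic_intros)
      then show ?thesis
        using ord_ge_mult[OF polyhol[of Om U] _ _ wU ordTphi] k by (auto simp: U_def)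
    qed
    finally show "(deriv^^k) (\<lambda>z. (g z - b0) + poly P z) w = 0" .
  qed
  have Psph: "norm (poly P z) < norm (g z - b)" if "b \<in> B" "norm z = r" for b z
  proof -
    have "z \<in> cball 0 Rb" using that by (simp add: Rb_def)
    then have "norm (poly P z) \<le> C * \<rho>" by (rule Pbound)
    also have "\<dots> < \<mu>" using \<rho> \<mu> by linarith
    also have "\<dots> \<le> \<mu>f b" using \<mu>(2) that by auto
    also have "\<dots> \<le> norm (g z - b)" using \<mu>f that by auto
    finally show ?thesis .
  qed
  have key: "{z. norm z < r \<and> (g z - b) + poly P z = 0} =
      (if b = b0 then ({z. norm z < r \<and> g z - b = 0} - {z0}) \<union> {w} else {z. norm z < r \<and> g z - b = 0})"
    if b: "b \<in> B" for b
  proof -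
    define H where "H = (\<lambda>z. (g z - b) + poly P z)"
    define Z' where "Z' = {z. norm z < r \<and> (g z - b) + poly P z = 0}"
    define Z where "Z = {z. norm z < r \<and> g z - b = 0}"
    define D where "D = (if b = b0 then (Z - {z0}) \<union> {w} else Z)"
    define mu where "mu s = (if s = w then m0 else m s)" for s
    have Hhol: "H holomorphic_on UNIV" unfolding H_def using hol by (intro holomorphic_intros)
    have Hzr: "H zr \<noteq> 0" unfolding H_def using Psph[OF b, of zr] nzr by (auto simp: add_eq_0_iff norm_minus_commute)
    have ZS: "Z \<subseteq> S" unfolding Z_def S_def using b by auto
    have wZ: "w \<notin> Z" using wS ZS by auto
    have rc: "(\<Sum>z\<in>Z'. zorder H z) = (\<Sum>z\<in>Z. zorder (\<lambda>z. g z - b) z)"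
      unfolding Z'_def Z_def H_def
      by (rule rouche_count[OF holb polyhol r]) (use Psph b in auto)
    have zmZ: "zorder (\<lambda>z. g z - b) z = int (m z)" if "z \<in> Z" for z
      using zm[of z] that ZS by (auto simp: Z_def)
    have DZ: "d \<in> Z - {z0} \<or> (b = b0 \<and> d = w)" if "d \<in> D" for d
    proof -
      have "z0 \<notin> Z" if "b \<noteq> b0" using that by (auto simp: Z_def b0_def)
      then show ?thesis using \<open>d \<in> D\<close> unfolding D_def by (auto split: if_splits)
    qed
    have ordD: "\<forall>k<mu d. (deriv^^k) H d = 0" if "d \<in> D" for d
    proof (cases "d \<in> Z - {z0}")
      case True
      then have "d \<in> S - {z0}" "g d = b" "d \<noteq> w" using ZS wZ by (auto simp: Z_def)
      then show ?thesis using ordZ[of d] unfolding H_def mu_def by simp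
    next
      case False
      then have "b = b0" "d = w" using DZ that by auto
      then show ?thesis using ordw unfolding H_def mu_def by simp
    qed
    have mu1: "mu d \<ge> 1" if "d \<in> D" for d
      using DZ[OF that] mpos ZS m0 unfolding mu_def by auto
    have Dsub: "D \<subseteq> Z'"
    proof
      fix d assume d: "d \<in> D"
      have "H d = 0" using ordD[OF d] mu1[OF d] by (metis funpow_0 less_one order_less_le_trans)
      moreover have "norm d < r" using DZ[OF d] wr by (auto simp: Z_def)
      ultimately show "d \<in> Z'" unfolding Z'_def H_def by auto
    qed
    have finZ': "finite Z'"
    proof -
      have "Z' \<subseteq> {z\<in>cball 0 r. H z = 0}" unfolding Z'_def H_def by auto
      then show ?thesis using entire_finite_zeros[OF Hhol Hzr compact_cball] finite_subset by blast
    qed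
    have posZ': "\<forall>z\<in>Z'. zorder H z > 0"
      using zorder_pos_entire[OF Hhol Hzr] unfolding Z'_def H_def by auto
    have geD: "\<forall>d\<in>D. zorder H d \<ge> int (mu d)"
      using zorder_ge_of_ord[OF Hhol Hzr] ordD by auto
    have finZ: "finite Z" using finS ZS finite_subset by blast
    have sumeq: "(\<Sum>z\<in>Z'. zorder H z) = (\<Sum>d\<in>D. int (mu d))"
    proof -
      have "(\<Sum>z\<in>Z'. zorder H z) = (\<Sum>z\<in>Z. int (m z))" using rc zmZ by simp
      also have "\<dots> = (\<Sum>d\<in>D. int (mu d))"
      proof (cases "b = b0")
        case False
        then show ?thesis unfolding D_def mu_def using wZ by (auto intro!: sum.cong)
      next
        case True
        have z0Z: "z0 \<in> Z" using True z0 by (simp add: Z_def b0_def)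
        have "(\<Sum>d\<in>D. int (mu d)) = (\<Sum>d\<in>Z - {z0}. int (mu d)) + int (mu w)"
          unfolding D_def using True finZ wZ by (simp add: sum.insert_if)
        also have "(\<Sum>d\<in>Z - {z0}. int (mu d)) = (\<Sum>d\<in>Z - {z0}. int (m d))"
          unfolding mu_def using wZ by (intro sum.cong) auto
        also have "int (mu w) = int (m z0)" unfolding mu_def m0_def by simp
        also have "(\<Sum>d\<in>Z - {z0}. int (m d)) + int (m z0) = (\<Sum>z\<in>Z. int (m z))"
          using finZ z0Z by (simp add: sum.remove)
        finally show ?thesis by simp
      qed
      finally show ?thesis .
    qed
    have "Z' = D" by (rule exact_zeros[OF finZ' Dsub posZ' geD sumeq])
    then show ?thesis unfolding Z'_def D_def Z_def .
  qed
  show ?thesis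
  proof (intro exI[of _ P] conjI ballI allI impI)
    fix a assume a: "a \<in> A"
    have "poly Qa a = 0" unfolding Qa_def using a finA by (auto simp: poly_prod prod_zero_iff)
    moreover have "P = Qa^2 * ((\<Prod>s\<in>S-{z0}. [:-s, 1:] ^ m s) * T)"
      unfolding P_def Om_def by (simp add: mult.assoc)
    ultimately show "poly P a = 0" "poly (pderiv P) a = 0" using poly_double_root by metis+
  next
    fix b z :: complex assume "b \<in> B" "norm z = r"
    then show "g z + poly P z \<noteq> b" using Psph[of b z] by (auto simp: norm_minus_commute)
  next
    show "dF nrm g (\<lambda>z. g z + poly P z) < \<delta>"
    proof (rule \<eta>(2)[rule_format, OF degP gF])
      fix z :: complex assume "norm z = 1"
      then have "z \<in> cball 0 Rb" using r by (simp add: Rb_def)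
      then have "norm (poly P z) \<le> C * \<rho>" by (rule Pbound)
      then show "norm (poly P z) \<le> \<eta>" using \<rho> by linarith
    qed
  next
    have eqb: "(g z + poly P z = b) \<longleftrightarrow> (g z - b) + poly P z = 0" for z b by (auto simp: algebra_simps)
    show "{z. norm z < r \<and> g z + poly P z \<in> B} - E = {z. norm z < r \<and> g z \<in> B} - E - {z0}"
    proof (intro equalityI subsetI)
      fix z assume z: "z \<in> {z. norm z < r \<and> g z + poly P z \<in> B} - E"
      define b where "b = g z + poly P z"
      have b: "b \<in> B" using z by (simp add: b_def)
      have "z \<in> {z. norm z < r \<and> (g z - b) + poly P z = 0}" using z by (simp add: b_def)
      then have zin: "z \<in> (if b = b0 then ({z. norm z < r \<and> g z - b = 0} - {z0}) \<union> {w} else {z. norm z < r \<and> g z - b = 0})"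
        using key[OF b] by simp
      show "z \<in> {z. norm z < r \<and> g z \<in> B} - E - {z0}"
      proof (cases "b = b0")
        case True then show ?thesis using zin z w b by auto
      next
        case False then show ?thesis using zin z b by (auto simp: b0_def)
      qed
    next
      fix z assume z: "z \<in> {z. norm z < r \<and> g z \<in> B} - E - {z0}"
      define b where "b = g z"
      have b: "b \<in> B" using z by (simp add: b_def)
      have "z \<in> (if b = b0 then ({z. norm z < r \<and> g z - b = 0} - {z0}) \<union> {w} else {z. norm z < r \<and> g z - b = 0})"
        using z by (simp add: b_def)
      then have "z \<in> {z. norm z < r \<and> (g z - b) + poly P z = 0}" using key[OF b] by simp
      then have "g z + poly P z = b" using eqb by auto
      then show "z \<in> {z. norm z < r \<and> g z + poly P z \<in> B} - E" using z b by auto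
    qed
  qed
qed



theorem lemma2p4:
  fixes F :: "(complex \<Rightarrow> complex) set"
    and nrm :: "nat \<Rightarrow> (complex \<Rightarrow> complex) \<Rightarrow> real"
    and E A B :: "complex set"
    and f :: "complex \<Rightarrow> complex"
    and R \<epsilon> :: real
  assumes "frechet_entire_space F nrm"
    and "countable E" and "closure E = UNIV"
    and "f \<in> F" and "\<not> (\<exists>a b. \<forall>z. f z = a * z + b)"
    and "finite A" and "A \<subseteq> E"
    and "finite B"
    and "R > 0" and "\<epsilon> > 0"
  shows "\<exists>g\<in>FA F f A. dF nrm f g < \<epsilon> \<and> g -` B \<inter> ball 0 R \<subseteq> E"
proof -
  note fes = assms(1) and dense = assms(3) and fF = assms(4) and naff = assms(5)
    and finA = assms(6) and AE = assms(7) and finB = assms(8) and R = assms(9) and \<epsilon> = assms(10)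
  have holf: "f holomorphic_on UNIV" by (rule fes_holo[OF fes fF])
  have fnc: "\<exists>z1. f z1 - b \<noteq> 0" for b
  proof (rule ccontr)
    assume "\<not> ?thesis"
    then have "\<forall>z. f z = 0 * z + b" by auto
    with naff show False by blast
  qed
  have holfb: "(\<lambda>z. f z - b) holomorphic_on UNIV" for b using holf by (intro holomorphic_intros)
  define Zall where "Zall = (\<Union>b\<in>B. {z\<in>cball 0 (R+1). f z - b = 0})"
  have finZ: "finite Zall"
    unfolding Zall_def
  proof (rule finite_UN_I[OF finB])
    fix b assume "b \<in> B"
    obtain z1 where "f z1 - b \<noteq> 0" using fnc by blast
    then show "finite {z\<in>cball 0 (R+1). f z - b = 0}"
      by (rule entire_finite_zeros[OF holfb _ compact_cball])
  qed
  obtain r where r: "r \<in> {R<..<R+1}" "r \<notin> norm ` Zall"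
  proof -
    have "infinite {R<..<R+1}" by simp
    then have "\<not> {R<..<R+1} \<subseteq> norm ` Zall" using finZ finite_subset by blast
    then show ?thesis using that by blast
  qed
  have r0: "r > 0" "R < r" using r R by auto
  have sphf: "\<forall>b\<in>B. \<forall>z. norm z = r \<longrightarrow> f z \<noteq> b"
  proof (intro ballI allI impI notI)
    fix b z assume "b \<in> B" "norm z = r" "f z = b"
    then have "z \<in> Zall" unfolding Zall_def using r by auto
    then show False using r \<open>norm z = r\<close> by force
  qed
  define Sg where "Sg g = {z. norm z < r \<and> g z \<in> B} - E" for g :: "complex \<Rightarrow> complex"
  have finSf: "finite (Sg f)"
  proof -
    have "Sg f \<subseteq> Zall" unfolding Sg_def Zall_def using r by auto
    then show ?thesis using finZ finite_subset by blast
  qed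
  have main: "\<forall>g. g \<in> FA F f A \<and> (\<forall>b\<in>B. \<forall>z. norm z = r \<longrightarrow> g z \<noteq> b) \<and> dF nrm f g < \<epsilon>
      \<and> finite (Sg g) \<and> card (Sg g) = n \<longrightarrow> (\<exists>g'. g' \<in> FA F f A \<and> dF nrm f g' < \<epsilon> \<and> Sg g' = {})" for n
  proof (induction n)
    case 0
    show ?case by auto
  next
    case (Suc n)
    show ?case
    proof (intro allI impI, elim conjE)
      fix g assume gFA: "g \<in> FA F f A" and sph: "\<forall>b\<in>B. \<forall>z. norm z = r \<longrightarrow> g z \<noteq> b"
        and dg: "dF nrm f g < \<epsilon>" and fin: "finite (Sg g)" and card: "card (Sg g) = Suc n"
      have gF: "g \<in> F" using gFA by (simp add: FA_def)
      have holg: "g holomorphic_on UNIV" by (rule fes_holo[OF fes gF])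
      obtain z0 where z0: "z0 \<in> Sg g" using card by (metis card.empty ex_in_conv nat.distinct(1))
      obtain P where P: "\<forall>a\<in>A. poly P a = 0 \<and> poly (pderiv P) a = 0"
          "\<forall>b\<in>B. \<forall>z. norm z = r \<longrightarrow> g z + poly P z \<noteq> b"
          "dF nrm g (\<lambda>z. g z + poly P z) < \<epsilon> - dF nrm f g"
          "{z. norm z < r \<and> g z + poly P z \<in> B} - E = {z. norm z < r \<and> g z \<in> B} - E - {z0}"
        using step[OF fes dense finA AE finB r0(1) gF sph, of z0 "\<epsilon> - dF nrm f g"] z0 dg
        unfolding Sg_def by auto
      define g1 where "g1 = (\<lambda>z. g z + poly P z)"
      have g1F: "g1 \<in> F" unfolding g1_def by (rule fes_add[OF fes gF fes_poly[OF fes]])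
      have g1FA: "g1 \<in> FA F f A"
        unfolding FA_def
      proof (intro CollectI conjI ballI g1F)
        fix a assume a: "a \<in> A"
        show "g1 a = f a" using gFA a P(1) by (simp add: g1_def FA_def)
        have "deriv g1 a = deriv g a + deriv (poly P) a"
        proof -
          have d1: "g field_differentiable at a" by (rule holomorphic_on_imp_differentiable_at[OF holg]) auto
          have d2: "poly P field_differentiable at a" unfolding field_differentiable_def using poly_DERIV by blast
          show ?thesis unfolding g1_def using deriv_add[OF d1 d2] by simp
        qed
        also have "deriv (poly P) a = poly (pderiv P) a" by (rule DERIV_imp_deriv[OF poly_DERIV])
        finally show "deriv g1 a = deriv f a" using gFA a P(1) by (simp add: FA_def)
      qed
      have dg1: "dF nrm f g1 < \<epsilon>"
        using dF_triangle[OF fes fF gF g1F] P(3) unfolding g1_def by linarith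
      have Sg1: "Sg g1 = Sg g - {z0}" using P(4) unfolding Sg_def g1_def by simp
      have "\<exists>g'. g' \<in> FA F f A \<and> dF nrm f g' < \<epsilon> \<and> Sg g' = {}"
        using Suc.IH[rule_format, of g1] g1FA P(2) dg1 fin card z0 Sg1 unfolding g1_def by auto
      then show "\<exists>g'. g' \<in> FA F f A \<and> dF nrm f g' < \<epsilon> \<and> Sg g' = {}" .
    qed
  qed
  have fFA: "f \<in> FA F f A" using fF by (simp add: FA_def)
  obtain g' where g': "g' \<in> FA F f A" "dF nrm f g' < \<epsilon>" "Sg g' = {}"
    using main[of "card (Sg f)"] fFA sphf finSf dF_self[OF fes fF] \<epsilon> by auto
  show ?thesis
  proof (intro bexI[OF _ g'(1)] conjI g'(2) subsetI)
    fix z assume "z \<in> g' -` B \<inter> ball 0 R"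
    then have "norm z < r" "g' z \<in> B" using r0 by auto
    then show "z \<in> E" using g'(3) unfolding Sg_def by auto
  qed
qed


end
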